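(* Let $p$ be a prime, let $\alpha,n\in\mathbb{N}$ with $\alpha\geqslant2$, and let $r,s,t\in\mathbb{Z}$ with $0\leqslant s,t<p^{\alpha-2}$. Then $$p^{-\left\lfloor\frac{p^{\alpha-2}n+s-p^{\alpha-1}}{\varphi(p^{\alpha})}\right\rfloor}\sum_{k\equiv p^{\alpha-2}r+t\ (\mathrm{mod}\ p^{\alpha})}\binom{p^{\alpha-2}n+s}k(-1)^k\equiv(-1)^t\binom st\Bigg(p^{-\left\lfloor\frac{n-p}{\varphi(p^2)}\right\rfloor}\sum_{k\equiv r\ (\mathrm{mod}\ p^2)}\binom nk(-1)^k\Bigg)\pmod p.$$
   Context: $\varphi$ is Euler's totient function. Sums run over all integers $k$ in the indicated residue class with $\binom Nk=0$ unless $0\le k\le N$. For rationals $u,v$, $u\equiv v\pmod p$ means $\operatorname{ord}_p(u-v)\geq 1$. *)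

theory Defs
  imports "HOL-Number_Theory.Number_Theory"
begin

definition rat_cong_p :: "nat \<Rightarrow> rat \<Rightarrow> rat \<Rightarrow> bool" where
  "rat_cong_p p u v \<longleftrightarrow>
     (\<exists>a b::int. b \<noteq> 0 \<and> \<not> int p dvd b \<and> u - v = of_int (int p * a) / of_int b)"

definition alt_binom_sum :: "nat \<Rightarrow> int \<Rightarrow> int \<Rightarrow> int" where
  "alt_binom_sum N a m = (\<Sum>k\<in>{k. k \<le> N \<and> [int k = a] (mod m)}. int (N choose k) * (-1) ^ k)"

end

theory Submission
  imports Defs "HOL-Computational_Algebra.Polynomial"
begin

definition dvY :: "nat \<Rightarrow> 'a::comm_ring_1 \<Rightarrow> nat \<Rightarrow> nat \<Rightarrow> 'a \<Rightarrow> bool" where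
  "dvY p Y m k P \<longleftrightarrow> (\<exists>A B. P = of_nat p ^ k * A + (Y ^ m - 1) * B)"

lemma dv_0: "dvY p Y m 0 P"
  unfolding dvY_def by (rule exI[of _ P], rule exI[of _ 0]) simp

lemma dv_add: "dvY p Y m k P \<Longrightarrow> dvY p Y m k Q \<Longrightarrow> dvY p Y m k (P + Q)"
proof -
  assume "dvY p Y m k P" "dvY p Y m k Q"
  then obtain A B A' B' where P: "P = of_nat p ^ k * A + (Y ^ m - 1) * B"
    and Q: "Q = of_nat p ^ k * A' + (Y ^ m - 1) * B'" unfolding dvY_def by blast
  show ?thesis unfolding dvY_def
    by (rule exI[of _ "A + A'"], rule exI[of _ "B + B'"]) (simp add: P Q algebra_simps)
qed

lemma dv_uminus: "dvY p Y m k P \<Longrightarrow> dvY p Y m k (- P)"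
proof -
  assume "dvY p Y m k P"
  then obtain A B where P: "P = of_nat p ^ k * A + (Y ^ m - 1) * B" unfolding dvY_def by blast
  show ?thesis unfolding dvY_def
    by (rule exI[of _ "- A"], rule exI[of _ "- B"]) (simp add: P algebra_simps)
qed

lemma dv_diff: "dvY p Y m k P \<Longrightarrow> dvY p Y m k Q \<Longrightarrow> dvY p Y m k (P - Q)"
  using dv_add[of p Y m k P "- Q"] dv_uminus[of p Y m k Q] by simp

lemma dv_mult: "dvY p Y m k P \<Longrightarrow> dvY p Y m k (P * Q)"
proof -
  assume "dvY p Y m k P"
  then obtain A B where P: "P = of_nat p ^ k * A + (Y ^ m - 1) * B" unfolding dvY_def by blast
  show ?thesis unfolding dvY_def
    by (rule exI[of _ "A * Q"], rule exI[of _ "B * Q"]) (simp add: P algebra_simps)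
qed

lemma dv_mult_left: "dvY p Y m k P \<Longrightarrow> dvY p Y m k (Q * P)"
  using dv_mult[of p Y m k P Q] by (simp add: mult.commute)

lemma dv_mono: "k' \<le> k \<Longrightarrow> dvY p Y m k P \<Longrightarrow> dvY p Y m k' P"
proof -
  assume kk: "k' \<le> k" and "dvY p Y m k P"
  then obtain A B where P: "P = of_nat p ^ k * A + (Y ^ m - 1) * B" unfolding dvY_def by blast
  have "(of_nat p :: 'a) ^ k = of_nat p ^ k' * of_nat p ^ (k - k')"
    using kk by (simp flip: power_add)
  then show ?thesis unfolding dvY_def
    by (intro exI[of _ "of_nat p ^ (k - k') * A"] exI[of _ B]) (simp add: P mult.assoc)
qed

lemma dv_ppow: "dvY p Y m k P \<Longrightarrow> dvY p Y m (k + j) (of_nat p ^ j * P)"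
proof -
  assume "dvY p Y m k P"
  then obtain A B where P: "P = of_nat p ^ k * A + (Y ^ m - 1) * B" unfolding dvY_def by blast
  show ?thesis unfolding dvY_def
    by (rule exI[of _ A], rule exI[of _ "of_nat p ^ j * B"]) (simp add: P algebra_simps power_add)
qed

lemma dv_sum: "finite S \<Longrightarrow> (\<And>i. i \<in> S \<Longrightarrow> dvY p Y m k (f i)) \<Longrightarrow> dvY p Y m k (\<Sum>i\<in>S. f i)"
proof (induction S rule: finite_induct)
  case empty
  then show ?case unfolding dvY_def by (rule_tac x=0 in exI, rule_tac x=0 in exI) simp
next
  case (insert x F)
  then show ?case by (simp add: dv_add)
qed

lemma dv_Phi:
  assumes "dvY p Y c k P"
  shows "dvY p Y (p * c) k ((\<Sum>j<p. Y ^ (c * j)) * P)"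
proof -
  from assms obtain A B where P: "P = of_nat p ^ k * A + (Y ^ c - 1) * B"
    unfolding dvY_def by blast
  have id: "(\<Sum>j<p. Y ^ (c * j)) * (Y ^ c - 1) = Y ^ (p * c) - 1"
  proof -
    have "(\<Sum>j<p. Y ^ (c * j)) = (\<Sum>j<p. (Y ^ c) ^ j)" by (simp add: power_mult)
    moreover have "(Y ^ c) ^ p = Y ^ (p * c)" by (simp add: power_mult[symmetric] mult.commute)
    ultimately show ?thesis using power_diff_1_eq[of "Y ^ c" p] by (simp add: mult.commute)
  qed
  have "(\<Sum>j<p. Y ^ (c * j)) * P = of_nat p ^ k * ((\<Sum>j<p. Y ^ (c * j)) * A)
      + ((\<Sum>j<p. Y ^ (c * j)) * (Y ^ c - 1)) * B"
    by (simp add: P algebra_simps)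
  also have "\<dots> = of_nat p ^ k * ((\<Sum>j<p. Y ^ (c * j)) * A) + (Y ^ (p * c) - 1) * B"
    by (simp only: id)
  finally show ?thesis unfolding dvY_def by blast
qed

lemma dv_level0:
  assumes "K \<ge> 1"
  shows "dvY p Y 1 k ((1 - Y) ^ K)"
proof -
  have "(1 - Y) ^ K = (Y ^ 1 - 1) * (-((1 - Y) ^ (K - 1)))"
    using assms by (cases K) (simp_all add: algebra_simps)
  then show ?thesis unfolding dvY_def
    by (intro exI[of _ 0] exI[of _ "-((1 - Y) ^ (K - 1))"]) simp
qed

definition pc :: "nat \<Rightarrow> 'a::comm_ring_1 \<Rightarrow> 'a \<Rightarrow> bool" where
  "pc p P Q \<longleftrightarrow> (\<exists>R. P = Q + of_nat p * R)"

lemma pc_refl: "pc p P P"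
  unfolding pc_def by (rule exI[of _ 0]) simp

lemma pc_trans: "pc p P Q \<Longrightarrow> pc p Q S \<Longrightarrow> pc p P S"
  unfolding pc_def
  apply (elim exE)
  subgoal for R R' by (rule exI[of _ "R + R'"]) (simp add: algebra_simps)
  done

lemma pc_mult: "pc p P Q \<Longrightarrow> pc p P' Q' \<Longrightarrow> pc p (P * P') (Q * Q')"
  unfolding pc_def
  apply (elim exE)
  subgoal for R R' by (rule exI[of _ "R * Q' + Q * R' + of_nat p * R * R'"]) (simp add: algebra_simps)
  done

lemma pc_power: "pc p P Q \<Longrightarrow> pc p (P ^ n) (Q ^ n)"
  by (induction n) (simp_all add: pc_refl pc_mult)

lemma pc_sum:
  assumes "finite S" "\<And>j. j \<in> S \<Longrightarrow> int p dvd c j"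
  shows "pc p (\<Sum>j\<in>S. of_int (c j) * Z j) 0"
proof -
  define d where "d j = c j div int p" for j
  have d: "c j = int p * d j" if "j \<in> S" for j
    using assms(2)[OF that] unfolding d_def by simp
  have "(\<Sum>j\<in>S. of_int (c j) * Z j) = (\<Sum>j\<in>S. of_nat p * (of_int (d j) * Z j))"
    by (rule sum.cong) (simp_all add: d algebra_simps)
  also have "\<dots> = of_nat p * (\<Sum>j\<in>S. of_int (d j) * Z j)"
    by (simp add: sum_distrib_left)
  finally show ?thesis unfolding pc_def by auto
qed

lemma pc_diff0: "pc p (P - Q) 0 \<Longrightarrow> pc p P Q"
  unfolding pc_def by (auto simp: algebra_simps)

lemma binom_minus:
  "(1 - Y :: 'a::comm_ring_1) ^ n = (\<Sum>k\<le>n. of_int ((-1) ^ k * int (n choose k)) * Y ^ k)"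
proof -
  have "(1 - Y) ^ n = (- Y + 1) ^ n" by simp
  also have "\<dots> = (\<Sum>k\<le>n. of_nat (n choose k) * (- Y) ^ k * 1 ^ (n - k))"
    by (rule binomial_ring)
  also have "\<dots> = (\<Sum>k\<le>n. of_int ((-1) ^ k * int (n choose k)) * Y ^ k)"
    by (rule sum.cong) (simp_all add: power_minus[of Y])
  finally show ?thesis .
qed

lemma prime_m1_pow:
  assumes "prime p"
  shows "int p dvd (-1) ^ p + 1"
proof (cases "p = 2")
  case True then show ?thesis by simp
next
  case False
  have "p > 2" using prime_ge_2_nat[OF assms] False by simp
  then have "odd p" using prime_odd_nat[OF assms] by simp
  then have "(-1 :: int) ^ p = -1" by simp
  then show ?thesis by simp
qed

lemma frob1:
  assumes "prime p"
  shows "pc p ((1 - Y :: 'a::comm_ring_1) ^ p) (1 - Y ^ p)"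
proof (rule pc_diff0)
  define c where "c k = (-1) ^ k * int (p choose k) - (if k = 0 then 1 else 0) + (if k = p then 1 else 0)" for k
  have p0: "p \<noteq> 0" using assms by auto
  have s0: "(\<Sum>k\<le>p. of_int (if k = 0 then 1 else 0) * Y ^ k) = 1"
  proof -
    have "(\<Sum>k\<le>p. of_int (if k = 0 then 1 else 0) * Y ^ k) = (\<Sum>k\<le>p. if k = 0 then Y ^ k else 0)"
      by (rule sum.cong) auto
    also have "\<dots> = 1" by (subst sum.delta) auto
    finally show ?thesis .
  qed
  have s1: "(\<Sum>k\<le>p. of_int (if k = p then 1 else 0) * Y ^ k) = Y ^ p"
  proof -
    have "(\<Sum>k\<le>p. of_int (if k = p then 1 else 0) * Y ^ k) = (\<Sum>k\<le>p. if k = p then Y ^ k else 0)"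
      by (rule sum.cong) auto
    also have "\<dots> = Y ^ p" by (subst sum.delta) auto
    finally show ?thesis .
  qed
  have "(\<Sum>k\<le>p. of_int (c k) * Y ^ k) = (\<Sum>k\<le>p. of_int ((-1) ^ k * int (p choose k)) * Y ^ k)
     - (\<Sum>k\<le>p. of_int (if k = 0 then 1 else 0) * Y ^ k) + (\<Sum>k\<le>p. of_int (if k = p then 1 else 0) * Y ^ k)"
    unfolding c_def by (simp only: of_int_add of_int_diff distrib_right left_diff_distrib sum.distrib sum_subtractf)
  also have "\<dots> = (1 - Y) ^ p - (1 - Y ^ p)"
    by (simp only: s0 s1 binom_minus[symmetric]) (simp add: algebra_simps)
  finally have "(1 - Y) ^ p - (1 - Y ^ p) = (\<Sum>k\<le>p. of_int (c k) * Y ^ k)" by simp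
  moreover have "int p dvd c k" if kS: "k \<in> {..p}" for k
  proof -
    consider "k = 0" | "k = p" | "0 < k \<and> k < p" using kS
      by (metis atMost_iff le_neq_implies_less neq0_conv)
    then show ?thesis
    proof cases
      case 1 then show ?thesis using p0 by (simp add: c_def)
    next
      case 2 then show ?thesis using p0 prime_m1_pow[OF assms] by (simp add: c_def add.commute)
    next
      case 3
      then have "p dvd (p choose k)" using dvd_choose_prime[of k p] assms by auto
      then have "int p dvd int (p choose k)" by simp
      then show ?thesis using 3 by (simp add: c_def)
    qed
  qed
  ultimately show "pc p ((1 - Y) ^ p - (1 - Y ^ p)) 0"
    using pc_sum[of "{..p}" p c "\<lambda>k. Y ^ k"] by simp
qed

lemma frob:
  assumes "prime p"
  shows "pc p ((1 - Y :: 'a::comm_ring_1) ^ (p ^ k)) (1 - Y ^ (p ^ k))"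
proof (induction k)
  case 0 then show ?case by (simp add: pc_refl)
next
  case (Suc k)
  have "(1 - Y) ^ (p ^ Suc k) = ((1 - Y) ^ (p ^ k)) ^ p"
    by (simp add: power_mult[symmetric] mult.commute)
  moreover have "pc p (((1 - Y) ^ (p ^ k)) ^ p) ((1 - Y ^ (p ^ k)) ^ p)"
    by (rule pc_power[OF Suc.IH])
  moreover have "pc p ((1 - Y ^ (p ^ k)) ^ p) (1 - (Y ^ (p ^ k)) ^ p)"
    by (rule frob1[OF assms])
  moreover have "(Y ^ (p ^ k)) ^ p = Y ^ (p ^ Suc k)"
    by (simp add: power_mult[symmetric] mult.commute)
  ultimately show ?case using pc_trans[of p "((1 - Y) ^ (p ^ k)) ^ p" "(1 - Y ^ (p ^ k)) ^ p"] by simp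
qed

lemma choose_pm1:
  assumes "prime p" "j < p"
  shows "int p dvd (-1) ^ j * int ((p - 1) choose j) - 1"
  using assms(2)
proof (induction j)
  case 0 then show ?case by simp
next
  case (Suc j)
  have p0: "p = Suc (p - 1)" using assms(1) prime_gt_0_nat by simp
  have "p choose Suc j = ((p - 1) choose j) + ((p - 1) choose Suc j)"
    by (subst p0) simp
  moreover have "p dvd (p choose Suc j)"
    using dvd_choose_prime[of "Suc j" p] assms(1) Suc.prems by auto
  ultimately have d: "int p dvd int ((p - 1) choose j) + int ((p - 1) choose Suc j)"
    by (metis of_nat_add of_nat_dvd_iff)
  have IH: "int p dvd (-1) ^ j * int ((p - 1) choose j) - 1" using Suc by simp
  have "(-1) ^ Suc j * int ((p - 1) choose Suc j) - 1
      = - ((-1) ^ j * (int ((p - 1) choose j) + int ((p - 1) choose Suc j)))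
        + ((-1) ^ j * int ((p - 1) choose j) - 1)"
    by (simp add: algebra_simps)
  also have "int p dvd \<dots>"
  proof (rule dvd_add)
    show "int p dvd - ((-1) ^ j * (int ((p - 1) choose j) + int ((p - 1) choose Suc j)))"
      using d by (simp only: dvd_minus_iff) (rule dvd_mult)
  qed (rule IH)
  finally show ?case .
qed

lemma binom_pm1:
  assumes "prime p"
  shows "pc p ((1 - Z :: 'a::comm_ring_1) ^ (p - 1)) (\<Sum>j<p. Z ^ j)"
proof (rule pc_diff0)
  have set: "{..p - 1} = {..<p}" using prime_gt_0_nat[OF assms] by auto
  have "(1 - Z) ^ (p - 1) - (\<Sum>j<p. Z ^ j)
      = (\<Sum>j<p. of_int ((-1) ^ j * int ((p - 1) choose j) - 1) * Z ^ j)"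
    unfolding binom_minus[of Z "p - 1"] set by (simp add: sum_subtractf left_diff_distrib)
  moreover have "int p dvd (-1) ^ j * int ((p - 1) choose j) - 1" if "j \<in> {..<p}" for j
    using choose_pm1[OF assms] that by simp
  ultimately show "pc p ((1 - Z) ^ (p - 1) - (\<Sum>j<p. Z ^ j)) 0"
    using pc_sum[of "{..<p}" p "\<lambda>j. (-1) ^ j * int ((p - 1) choose j) - 1" "\<lambda>j. Z ^ j"] by simp
qed

lemma phi_cong:
  assumes "prime p"
  shows "pc p ((1 - Y :: 'a::comm_ring_1) ^ (p ^ b * (p - 1))) (\<Sum>j<p. Y ^ (p ^ b * j))"
proof -
  have e1: "(1 - Y) ^ (p ^ b * (p - 1)) = ((1 - Y) ^ (p ^ b)) ^ (p - 1)"
    by (simp add: power_mult)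
  have c1: "pc p (((1 - Y) ^ (p ^ b)) ^ (p - 1)) ((1 - Y ^ (p ^ b)) ^ (p - 1))"
    by (rule pc_power[OF frob[OF assms]])
  have c2: "pc p ((1 - Y ^ (p ^ b)) ^ (p - 1)) (\<Sum>j<p. (Y ^ (p ^ b)) ^ j)"
    by (rule binom_pm1[OF assms])
  have e2: "(\<Sum>j<p. (Y ^ (p ^ b)) ^ j) = (\<Sum>j<p. Y ^ (p ^ b * j))"
    by (simp add: power_mult)
  show ?thesis unfolding e1 e2[symmetric] by (rule pc_trans[OF c1 c2])
qed

lemma fleck_step:
  assumes p: "prime p"
    and H: "\<And>K'. K' \<ge> p ^ b \<Longrightarrow>
       dvY p (Y :: 'a::comm_ring_1) (p ^ b) ((K' - p ^ b) div (p ^ b * (p - 1)) + 1) ((1 - Y) ^ K')"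
  shows "dvY p Y (p * p ^ b) ((K - p ^ b) div (p ^ b * (p - 1))) ((1 - Y) ^ K)"
proof (induction K rule: less_induct)
  case (less K)
  define c where "c = p ^ b"
  define f where "f = c * (p - 1)"
  have c0: "c > 0" using p prime_gt_0_nat c_def by simp
  have f0: "f > 0" using p prime_gt_1_nat c0 f_def by simp
  have pc_eq: "p * c = c + f" using prime_gt_0_nat[OF p] by (cases p) (simp_all add: f_def algebra_simps)
  show ?case
  proof (cases "K < p * c")
    case True
    then have "K - c < f" using pc_eq f0 by simp
    then have "(K - c) div f = 0" by (rule div_less)
    then show ?thesis by (simp add: c_def f_def dv_0)
  next
    case False
    define K' where "K' = K - f"
    have K'c: "K' \<ge> c" and KK: "K = K' + f" using False pc_eq by (auto simp: K'_def)
    have "K - c = (K' - c) + f" using K'c KK by simp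
    then have E: "(K - c) div f = (K' - c) div f + 1"
      using f0 by simp
    obtain R where R: "(1 - Y) ^ f = (\<Sum>j<p. Y ^ (c * j)) + of_nat p * R"
      using phi_cong[OF p, of Y b] unfolding pc_def c_def f_def by blast
    have "(1 - Y) ^ K = (\<Sum>j<p. Y ^ (c * j)) * (1 - Y) ^ K' + of_nat p ^ 1 * ((1 - Y) ^ K' * R)"
      by (simp add: KK power_add R algebra_simps)
    moreover have "dvY p Y (p * c) ((K' - c) div f + 1) ((\<Sum>j<p. Y ^ (c * j)) * (1 - Y) ^ K')"
      using dv_Phi H[of K'] K'c by (simp add: c_def f_def)
    moreover have "dvY p Y (p * c) ((K' - c) div f + 1) (of_nat p ^ 1 * ((1 - Y) ^ K' * R))"
      using dv_ppow[OF dv_mult[OF less.IH[of K'], of R], of 1] KK f0 by (simp add: c_def f_def)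
    ultimately show ?thesis using E dv_add by (metis c_def f_def)
  qed
qed

lemma t1: "(f::nat) > 0 \<Longrightarrow> (f * x + (f - 1)) div f = x"
  by (metis div_less diff_less div_mult_self4 add.right_neutral less_one not_gr_zero)
lemma t2: "(p::nat) > 1 \<Longrightarrow> (u + (p - 1)) div (p - 1) = u div (p - 1) + 1"
  by (metis div_add_self2 neq0_conv zero_less_diff)
lemma a1: "(f::nat) > 0 \<Longrightarrow> m < f * (m div f + 1)"
  by (metis div_less_iff_less_mult less_add_one mult.commute)
lemma a2: "(i::nat) \<ge> 2 \<Longrightarrow> f \<ge> 2 \<Longrightarrow> i \<le> f * (i - 1)"
proof -
  assume "i \<ge> 2" "f \<ge> 2"
  then have "i \<le> 2 * (i - 1)" by arith
  also have "\<dots> \<le> f * (i - 1)" using \<open>f \<ge> 2\<close> by (rule mult_le_mono1)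
  finally show ?thesis .
qed
lemma a3: "(x::nat) < f * y \<Longrightarrow> x div f < y"
  by (simp add: less_mult_imp_div_less mult.commute)
lemma a4: "(a::nat) mod f \<ge> 1 \<Longrightarrow> f > 0 \<Longrightarrow> (a - 1) div f = a div f"
  by (metis One_nat_def Suc_pred div_Suc linorder_not_less not_gr_zero not_one_le_zero zero_le zero_less_diff)
lemma a5: "(f::nat) > 0 \<Longrightarrow> t \<ge> 1 \<Longrightarrow> (f * t - 1) div f = t - 1"
proof -
  assume f: "f > 0" and t: "t \<ge> 1"
  then obtain t' where t': "t = Suc t'" by (cases t) auto
  have "f * t - 1 = f * t' + (f - 1)" using f t' by simp
  then show ?thesis using t1[OF f, of t'] t' by simp
qed

lemma natA:
  fixes n p i f :: nat
  assumes "2 \<le> i" "2 \<le> f"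
  shows "(n - p) div f + 1 \<le> (n - i - p) div f + i"
proof -
  define d where "d = (n - i - p) div f"
  have "n - i - p < f * (d + 1)" unfolding d_def by (rule a1) (use assms in simp)
  moreover have "i \<le> f * (i - 1)" using assms by (rule a2)
  ultimately have "n - p < f * (d + 1) + f * (i - 1)" by linarith
  also have "f * (d + 1) + f * (i - 1) = f * ((d + 1) + (i - 1))" by (simp only: add_mult_distrib2)
  also have "(d + 1) + (i - 1) = d + i" using assms by simp
  finally have "(n - p) div f < d + i" by (rule a3)
  then show ?thesis by (simp add: d_def)
qed

lemma natB:
  fixes a f :: nat
  assumes f0: "0 < f" and lt: "(a - 1) div f < a div f"
  shows "f dvd a \<and> a div f = (a - 1) div f + 1"
proof -
  have "f dvd a"
  proof (rule ccontr)
    assume "\<not> f dvd a"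
    then have "a mod f \<ge> 1" by (simp add: mod_eq_0_iff_dvd[symmetric])
    then have "(a - 1) div f = a div f" using f0 by (rule a4)
    then show False using lt by simp
  qed
  then obtain t where t: "a = f * t" by blast
  have "t \<noteq> 0" using lt t by (cases t) auto
  then have "(a - 1) div f = t - 1" using a5[OF f0, of t] t by simp
  then show ?thesis using t \<open>f dvd a\<close> \<open>t \<noteq> 0\<close> f0 by simp
qed

lemma fleck1:
  assumes p: "prime p"
  shows "dvY p (Y :: 'a::comm_ring_1) p ((K - 1) div (p - 1)) ((1 - Y) ^ K)"
proof -
  have H: "dvY p Y (p ^ 0) ((K' - p ^ 0) div (p ^ 0 * (p - 1)) + 1) ((1 - Y) ^ K')"
    if "K' \<ge> p ^ 0" for K'
    using that unfolding power_0 by (intro dv_level0)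
  show ?thesis using fleck_step[OF p H, of K] by (simp only: power_0 mult_1_right mult_1_left)
qed

lemma fleck2:
  assumes p: "prime p"
  shows "dvY p (Y :: 'a::comm_ring_1) (p * p) ((K - p) div (p * (p - 1))) ((1 - Y) ^ K)"
proof -
  have H0: "dvY p Y p ((K' - p) div (p * (p - 1)) + 1) ((1 - Y) ^ K')" if K': "K' \<ge> p" for K'
  proof (rule dv_mono[OF _ fleck1[OF p]])
    have p1: "p - 1 > 0" using p prime_gt_1_nat by simp
    obtain u where u: "K' = p + u" using K' le_Suc_ex by blast
    have a: "u div (p * (p - 1)) \<le> u div (p - 1)"
      using p1 prime_gt_0_nat[OF p] by (intro div_le_mono2) auto
    have "K' - 1 = u + (p - 1)" using u p1 by simp
    then have b: "(K' - 1) div (p - 1) = u div (p - 1) + 1"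
      using prime_gt_1_nat[OF p] by (simp only: t2)
    show "(K' - p) div (p * (p - 1)) + 1 \<le> (K' - 1) div (p - 1)"
      using a b u by simp
  qed
  have H: "dvY p Y (p ^ 1) ((K' - p ^ 1) div (p ^ 1 * (p - 1)) + 1) ((1 - Y) ^ K')"
    if "K' \<ge> p ^ 1" for K' unfolding power_one_right by (rule H0) (use that in simp)
  have "dvY p Y (p * p ^ 1) ((K - p ^ 1) div (p ^ 1 * (p - 1))) ((1 - Y) ^ K)"
    by (rule fleck_step[OF p H])
  then show ?thesis by (simp only: power_one_right)
qed

lemma lucas_gen:
  assumes p: "prime p" and q: "q = p ^ k"
  shows "dvY p ((X :: 'a::comm_ring_1) ^ q) (p * p) ((n - p) div (p * (p - 1)) + 1)
           ((1 - X) ^ (q * n) - (1 - X ^ q) ^ n)"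
proof -
  define w where "w = 1 - X ^ q"
  define f where "f = p * (p - 1)"
  define e where "e = (n - p) div f"
  have f2: "f \<ge> 2"
  proof -
    have "p \<ge> 2" using p prime_ge_2_nat by blast
    then have "2 * 1 \<le> p * (p - 1)" by (intro mult_le_mono) auto
    then show ?thesis by (simp add: f_def)
  qed
  obtain A where A: "(1 - X) ^ q = w + of_nat p * A"
    using frob[OF p, of X k] unfolding pc_def w_def q by blast
  have "(1 - X) ^ (q * n) = (of_nat p * A + w) ^ n"
    by (simp add: power_mult A add.commute)
  also have "\<dots> = (\<Sum>i\<le>n. of_nat (n choose i) * (of_nat p * A) ^ i * w ^ (n - i))"
    by (rule binomial_ring)
  also have "{..n} = insert 0 {1..n}" by auto
  finally have eq: "(1 - X) ^ (q * n) - w ^ n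
      = (\<Sum>i\<in>{1..n}. of_nat p ^ i * (of_nat (n choose i) * A ^ i * w ^ (n - i)))"
    by (simp add: power_mult_distrib algebra_simps)
  have fl: "dvY p (X ^ q) (p * p) ((n - i - p) div f) (w ^ (n - i))" for i
    using fleck2[OF p, of "X ^ q" "n - i"] by (simp add: w_def f_def)
  have "dvY p (X ^ q) (p * p) (e + 1) (of_nat p ^ i * (of_nat (n choose i) * A ^ i * w ^ (n - i)))"
    if i: "i \<in> {1..n}" for i
  proof (cases "i \<ge> 2")
    case True
    have le: "e + 1 \<le> (n - i - p) div f + i" using natA[OF True f2, of n p] by (simp add: e_def)
    have "dvY p (X ^ q) (p * p) ((n - i - p) div f + i)
            (of_nat p ^ i * (of_nat (n choose i) * A ^ i * w ^ (n - i)))"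
      by (rule dv_ppow[OF dv_mult_left[OF fl[of i]]])
    then show ?thesis by (rule dv_mono[OF le])
  next
    case False
    then have i1: "i = 1" using i by auto
    define d where "d = (n - 1 - p) div f"
    have base: "dvY p (X ^ q) (p * p) (d + j) (of_nat p ^ j * (Q * w ^ (n - 1)))" for j Q
      unfolding d_def by (rule dv_ppow[OF dv_mult_left[OF fl[of 1]]])
    show ?thesis
    proof (cases "e \<le> d")
      case True
      have "dvY p (X ^ q) (p * p) (d + 1) (of_nat p ^ 1 * ((of_nat (n choose 1) * A ^ 1) * w ^ (n - 1)))"
        by (rule base)
      then have "dvY p (X ^ q) (p * p) (e + 1) (of_nat p ^ 1 * ((of_nat (n choose 1) * A ^ 1) * w ^ (n - 1)))"
        by (rule dv_mono[rotated]) (use True in simp)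
      then show ?thesis unfolding i1 by (simp only: mult.assoc)
    next
      case False
      have "(n - p - 1) div f < (n - p) div f" using False by (simp add: e_def d_def diff_commute)
      from natB[OF _ this] f2
      have fd: "f dvd (n - p)" and ed: "e = d + 1"
        by (auto simp: e_def d_def diff_commute)
      have np: "n \<ge> p" using False by (auto simp: e_def d_def)
      have "p dvd (n - p)" using fd unfolding f_def by (rule dvd_mult_left)
      then have "p dvd (n - p) + p" by simp
      then have "p dvd n" using np by simp
      then obtain n' where n': "n = p * n'" by blast
      have "dvY p (X ^ q) (p * p) (d + 2) (of_nat p ^ 2 * ((of_nat n' * A) * w ^ (n - 1)))"
        by (rule base)
      moreover have "of_nat p ^ i * (of_nat (n choose i) * A ^ i * w ^ (n - i))
          = of_nat p ^ 2 * ((of_nat n' * A) * w ^ (n - 1))"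
        using i1 n' by (simp add: power2_eq_square algebra_simps)
      ultimately show ?thesis using ed by simp
    qed
  qed
  then have "dvY p (X ^ q) (p * p) (e + 1)
      (\<Sum>i\<in>{1..n}. of_nat p ^ i * (of_nat (n choose i) * A ^ i * w ^ (n - i)))"
    by (intro dv_sum) auto
  then show ?thesis using eq by (simp add: w_def e_def f_def)
qed

definition cc :: "int \<Rightarrow> int poly \<Rightarrow> int \<Rightarrow> int" where
  "cc m P a = (\<Sum>k\<le>degree P. if [int k = a] (mod m) then coeff P k else 0)"

lemma cc_bound:
  assumes "degree P \<le> D"
  shows "cc m P a = (\<Sum>k\<le>D. if [int k = a] (mod m) then coeff P k else 0)"
  unfolding cc_def
proof (rule sum.mono_neutral_left)
  show "\<forall>i\<in>{..D} - {..degree P}. (if [int i = a] (mod m) then coeff P i else 0) = 0"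
    by (auto simp: coeff_eq_0)
qed (use assms in auto)

lemma cc_add: "cc m (P + Q) a = cc m P a + cc m Q a"
proof -
  define D where "D = max (degree P) (degree Q)"
  have d1: "degree (P + Q) \<le> D" unfolding D_def by (rule degree_add_le) auto
  have d2: "degree P \<le> D" "degree Q \<le> D" unfolding D_def by auto
  show ?thesis
    unfolding cc_bound[OF d1] cc_bound[OF d2(1)] cc_bound[OF d2(2)]
    by (simp add: sum.distrib[symmetric] if_distrib cong: if_cong)
qed

lemma cc_smult: "cc m (smult c P) a = c * cc m P a"
proof -
  have d1: "degree (smult c P) \<le> degree P" by (rule degree_smult_le)
  show ?thesis unfolding cc_bound[OF d1] cc_bound[OF order.refl[of "degree P"]] sum_distrib_left
    by (rule sum.cong) auto
qed

lemma cc_zero: "cc m 0 a = 0"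
  using cc_smult[of m 0 0 a] by simp

lemma cc_sum: "finite S \<Longrightarrow> cc m (\<Sum>i\<in>S. f i) a = (\<Sum>i\<in>S. cc m (f i) a)"
  by (induction S rule: finite_induct) (simp_all add: cc_zero cc_add)

lemma cc_diff: "cc m (P - Q) a = cc m P a - cc m Q a"
proof -
  have eq: "P - Q = P + smult (-1) Q" by simp
  show ?thesis using cc_add[of m P "smult (-1) Q" a] cc_smult[of m "-1" Q a] by (simp only: eq)
qed

lemma cc_shift: "cc m ([:0, 1:] ^ j * P) a = cc m P (a - int j)"
proof -
  define g where "g k = (if [int k = a] (mod m) then coeff ([:0, 1:] ^ j * P) k else 0)" for k
  have Xj: "[:0, 1:] ^ j = (monom 1 j :: int poly)" by (simp add: monom_altdef)
  have d: "degree ([:0, 1:] ^ j * P) \<le> j + degree P"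
    unfolding Xj using degree_mult_le[of "monom 1 j" P] degree_monom_le[of "1::int" j] by simp
  have "cc m ([:0, 1:] ^ j * P) a = (\<Sum>k\<le>j + degree P. g k)"
    unfolding cc_bound[OF d] g_def ..
  also have "\<dots> = (\<Sum>k\<in>{0 + j..degree P + j}. g k)"
  proof (rule sum.mono_neutral_right)
    show "\<forall>i\<in>{..j + degree P} - {0 + j..degree P + j}. g i = 0"
      by (auto simp: g_def Xj coeff_monom_mult)
  qed auto
  also have "\<dots> = (\<Sum>i\<in>{0..degree P}. g (i + j))"
    by (rule sum.shift_bounds_cl_nat_ivl)
  also have "\<dots> = cc m P (a - int j)"
    unfolding cc_def atLeast0AtMost
  proof (rule sum.cong)
    fix i assume "i \<in> {..degree P}"
    have "[int (i + j) = a] (mod m) \<longleftrightarrow> [int i = a - int j] (mod m)"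
      by (simp add: cong_iff_dvd_diff algebra_simps)
    then show "g (i + j) = (if [int i = a - int j] (mod m) then coeff P i else 0)"
      by (simp add: g_def Xj coeff_monom_mult)
  qed simp
  finally show ?thesis .
qed

lemma cc_cong_idx: "[a = a'] (mod m) \<Longrightarrow> cc m P a = cc m P a'"
  unfolding cc_def
  by (rule sum.cong) (auto intro: cong_trans cong_sym)

lemma cc_cyc: "cc (int M) (([:0, 1:] ^ M - 1) * B) a = 0"
proof -
  have "cc (int M) (([:0, 1:] ^ M - 1) * B) a = cc (int M) ([:0, 1:] ^ M * B) a - cc (int M) B a"
    by (simp add: left_diff_distrib cc_diff)
  also have "cc (int M) ([:0, 1:] ^ M * B) a = cc (int M) B (a - int M)" by (rule cc_shift)
  also have "\<dots> = cc (int M) B a" by (rule cc_cong_idx) (simp add: cong_iff_dvd_diff)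
  finally show ?thesis by simp
qed

lemma of_nat_mult_poly: "(of_nat n :: int poly) * A = smult (int n) A"
  by (simp add: of_nat_poly)

lemma of_int_mult_poly: "(of_int n :: int poly) * A = smult n A"
  by (simp add: of_int_poly)

lemma dv_cc:
  assumes "dvY p [:0, 1:] M k P"
  shows "int p ^ k dvd cc (int M) P a"
proof -
  obtain A B where P: "P = of_nat p ^ k * A + ([:0, 1:] ^ M - 1) * B"
    using assms unfolding dvY_def by blast
  have "(of_nat p ^ k :: int poly) * A = smult (int (p ^ k)) A"
    by (simp only: of_nat_power[symmetric] of_nat_mult_poly)
  then have "cc (int M) P a = int p ^ k * cc (int M) A a"
    by (simp add: P cc_add cc_cyc cc_smult)
  then show ?thesis by simp
qed

lemma cc_one: "cc m 1 b = (if [0 = b] (mod m) then 1 else 0)"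
  unfolding cc_def by simp

lemma cc_X_pow: "cc m ([:0, 1:] ^ k) a = (if [int k = a] (mod m) then 1 else 0)"
proof -
  have "cc m ([:0, 1:] ^ k) a = cc m ([:0, 1:] ^ k * 1) a" by simp
  also have "\<dots> = cc m 1 (a - int k)" by (rule cc_shift)
  also have "\<dots> = (if [int k = a] (mod m) then 1 else 0)"
    unfolding cc_one by (simp add: cong_iff_dvd_diff dvd_diff_commute)
  finally show ?thesis .
qed

lemma cc_binsum:
  fixes N :: nat
  shows "cc m (\<Sum>k\<le>N. of_int (c k) * [:0, 1:] ^ (f k)) a
     = (\<Sum>k\<le>N. if [int (f k) = a] (mod m) then c k else 0)"
  by (subst cc_sum) (simp_all add: of_int_mult_poly cc_smult cc_X_pow if_distrib cong: if_cong)

lemma alt_cc: "alt_binom_sum N a m = cc m ((1 - [:0, 1:]) ^ N) a"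
proof -
  have "cc m ((1 - [:0, 1:]) ^ N) a
      = cc m (\<Sum>k\<le>N. of_int ((-1) ^ k * int (N choose k)) * [:0, 1:] ^ k) a"
    by (simp only: binom_minus)
  also have "\<dots> = (\<Sum>k\<le>N. if [int k = a] (mod m) then (-1) ^ k * int (N choose k) else 0)"
    by (rule cc_binsum)
  also have "\<dots> = (\<Sum>k\<in>{k \<in> {..N}. [int k = a] (mod m)}. (-1) ^ k * int (N choose k))"
    by (rule sum.inter_filter[symmetric]) simp
  also have "{k \<in> {..N}. [int k = a] (mod m)} = {k. k \<le> N \<and> [int k = a] (mod m)}" by auto
  finally show ?thesis unfolding alt_binom_sum_def by (simp add: mult.commute)
qed

lemma small_dvd_zero:
  fixes x q :: int
  assumes "q dvd x" "\<bar>x\<bar> < q"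
  shows "x = 0"
proof (rule ccontr)
  assume "x \<noteq> 0"
  then have "\<bar>q\<bar> \<le> \<bar>x\<bar>" using dvd_imp_le_int assms(1) by blast
  then show False using assms(2) by simp
qed

lemma key_cong:
  fixes q m2 i r j T :: int
  assumes q: "q > 0" and j: "0 \<le> j" "j < q" and T: "0 \<le> T" "T < q"
  shows "[q * i = q * r + T - j] (mod q * m2) \<longleftrightarrow> (j = T \<and> [i = r] (mod m2))"
proof
  assume c: "[q * i = q * r + T - j] (mod q * m2)"
  then have d: "q * m2 dvd q * i - (q * r + T - j)" by (simp add: cong_iff_dvd_diff)
  then have "q dvd q * i - (q * r + T - j)" by (rule dvd_mult_left)
  moreover have "q dvd q * (i - r)" by simp
  ultimately have "q dvd q * (i - r) - (q * i - (q * r + T - j))" by (simp only: dvd_diff)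
  moreover have "q * (i - r) - (q * i - (q * r + T - j)) = T - j" by (simp add: algebra_simps)
  ultimately have "q dvd T - j" by simp
  then have "T - j = 0" by (rule small_dvd_zero) (use j T in auto)
  then have jT: "j = T" by simp
  then have "q * m2 dvd q * (i - r)" using d by (simp add: algebra_simps)
  then have "m2 dvd i - r" using q by simp
  then show "j = T \<and> [i = r] (mod m2)" using jT by (simp add: cong_iff_dvd_diff)
next
  assume "j = T \<and> [i = r] (mod m2)"
  then have "j = T" "m2 dvd i - r" by (auto simp: cong_iff_dvd_diff)
  then have "q * m2 dvd q * (i - r)" by simp
  then show "[q * i = q * r + T - j] (mod q * m2)"
    using \<open>j = T\<close> by (simp add: cong_iff_dvd_diff algebra_simps)
qed

lemma alt_sum:
  "alt_binom_sum N a m = (\<Sum>k\<le>N. if [int k = a] (mod m) then (-1) ^ k * int (N choose k) else 0)"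
proof -
  have "(\<Sum>k\<le>N. if [int k = a] (mod m) then (-1) ^ k * int (N choose k) else 0)
      = (\<Sum>k\<in>{k \<in> {..N}. [int k = a] (mod m)}. (-1) ^ k * int (N choose k))"
    by (rule sum.inter_filter[symmetric]) simp
  also have "{k \<in> {..N}. [int k = a] (mod m)} = {k. k \<le> N \<and> [int k = a] (mod m)}" by auto
  finally show ?thesis unfolding alt_binom_sum_def by (simp add: mult.commute)
qed

lemma main_int:
  fixes p \<alpha> n S T :: nat and r :: int
  assumes p: "prime p" and \<alpha>: "\<alpha> \<ge> 2" and S: "S < p ^ (\<alpha> - 2)" and T: "T < p ^ (\<alpha> - 2)"
  shows "int p ^ ((n - p) div (p * (p - 1)) + 1) dvd
    alt_binom_sum (p ^ (\<alpha> - 2) * n + S) (int (p ^ (\<alpha> - 2)) * r + int T) (int (p ^ \<alpha>))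
      - (-1) ^ T * int (S choose T) * alt_binom_sum n r (int (p ^ 2))"
proof -
  define q where "q = p ^ (\<alpha> - 2)"
  define X where "X = ([:0, 1:] :: int poly)"
  define e where "e = (n - p) div (p * (p - 1))"
  define D where "D = (1 - X) ^ (q * n) - (1 - X ^ q) ^ n"
  define W where "W = (1 - X ^ q) ^ n"
  define A2 where "A2 = alt_binom_sum n r (int (p ^ 2))"
  define a where "a = int q * r + int T"
  have q0: "q > 0" using p prime_gt_0_nat q_def by simp
  have M: "p ^ \<alpha> = q * (p * p)"
  proof -
    obtain k where k: "\<alpha> = k + 2" using \<alpha> le_Suc_ex by (metis add.commute)
    show ?thesis unfolding q_def k by (simp add: power_add power2_eq_square)
  qed
  have dvD: "dvY p X (q * (p * p)) (e + 1) D"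
  proof -
    have "dvY p (X ^ q) (p * p) (e + 1) D"
      unfolding D_def e_def by (rule lucas_gen[OF p q_def])
    then show ?thesis unfolding dvY_def by (simp add: power_mult)
  qed
  have split: "(1 - X) ^ (q * n + S) = (1 - X) ^ S * W + (1 - X) ^ S * D"
    by (simp add: D_def W_def power_add algebra_simps)
  have T1: "alt_binom_sum (q * n + S) a (int (p ^ \<alpha>))
      = cc (int (q * (p * p))) ((1 - X) ^ S * W) a + cc (int (q * (p * p))) ((1 - X) ^ S * D) a"
  proof -
    have "alt_binom_sum (q * n + S) a (int (p ^ \<alpha>)) = cc (int (q * (p * p))) ((1 - X) ^ (q * n + S)) a"
      unfolding alt_cc M X_def ..
    also have "\<dots> = cc (int (q * (p * p))) ((1 - X) ^ S * W + (1 - X) ^ S * D) a"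
      by (simp only: split)
    finally show ?thesis by (simp only: cc_add)
  qed
  have div2: "int p ^ (e + 1) dvd cc (int (q * (p * p))) ((1 - X) ^ S * D) a"
    using dv_cc[OF dv_mult_left[OF dvD[unfolded X_def]]] by (simp add: X_def)
  have W_exp: "W = (\<Sum>i\<le>n. of_int ((-1) ^ i * int (n choose i)) * X ^ (q * i))"
    unfolding W_def by (simp add: binom_minus power_mult)
  have ccW: "cc (int (q * (p * p))) W (a - int j) = (if j = T then A2 else 0)" if j: "j \<le> S" for j
  proof -
    have "cc (int (q * (p * p))) W (a - int j)
        = (\<Sum>i\<le>n. if [int (q * i) = a - int j] (mod int (q * (p * p)))
              then (-1) ^ i * int (n choose i) else 0)"
      unfolding W_exp X_def by (rule cc_binsum)
    also have "\<dots> = (\<Sum>i\<le>n. if j = T \<and> [int i = r] (mod int (p ^ 2))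
              then (-1) ^ i * int (n choose i) else 0)"
    proof (rule sum.cong)
      fix i
      have "[int q * int i = int q * r + int T - int j] (mod int q * int (p ^ 2))
          \<longleftrightarrow> (int j = int T \<and> [int i = r] (mod int (p ^ 2)))"
        by (rule key_cong) (use q0 j S T in \<open>auto simp: q_def\<close>)
      then show "(if [int (q * i) = a - int j] (mod int (q * (p * p))) then (-1) ^ i * int (n choose i) else 0)
          = (if j = T \<and> [int i = r] (mod int (p ^ 2)) then (-1) ^ i * int (n choose i) else 0)"
        by (simp add: a_def power2_eq_square algebra_simps)
    qed simp
    also have "\<dots> = (if j = T then A2 else 0)"
      unfolding A2_def alt_sum by simp
    finally show ?thesis .
  qed
  have e1: "(1 - X) ^ S * W = (\<Sum>j\<le>S. of_int ((-1) ^ j * int (S choose j)) * (X ^ j * W))"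
    by (simp only: binom_minus sum_distrib_right mult.assoc)
  have "cc (int (q * (p * p))) ((1 - X) ^ S * W) a
      = (\<Sum>j\<le>S. cc (int (q * (p * p))) (of_int ((-1) ^ j * int (S choose j)) * (X ^ j * W)) a)"
    unfolding e1 by (rule cc_sum) simp
  also have "\<dots> = (\<Sum>j\<le>S. ((-1) ^ j * int (S choose j)) * cc (int (q * (p * p))) W (a - int j))"
    by (rule sum.cong) (simp_all only: of_int_mult_poly cc_smult X_def cc_shift)
  also have "\<dots> = (\<Sum>j\<le>S. ((-1) ^ j * int (S choose j)) * (if j = T then A2 else 0))"
  proof (rule sum.cong[OF refl])
    fix j assume "j \<in> {..S}"
    then show "((-1) ^ j * int (S choose j)) * cc (int (q * (p * p))) W (a - int j)
        = ((-1) ^ j * int (S choose j)) * (if j = T then A2 else 0)"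
      using ccW[of j] by simp
  qed
  also have "\<dots> = (-1) ^ T * int (S choose T) * A2"
    by (cases "T \<le> S") (simp_all add: if_distrib sum.delta cong: if_cong)
  finally have main: "cc (int (q * (p * p))) ((1 - X) ^ S * W) a = (-1) ^ T * int (S choose T) * A2" .
  show ?thesis
    using div2 unfolding T1[unfolded main] A2_def[symmetric] a_def[symmetric] q_def[symmetric] e_def[symmetric]
    by simp
qed

lemma div_shift_small:
  fixes q X s :: int
  assumes "q > 0" "0 \<le> s" "s < q"
  shows "(q * X + s) div q = X"
proof -
  have "(q * X + s) div q = X + s div q" using assms(1) by simp
  also have "s div q = 0" using assms by (simp add: div_pos_pos_trivial)
  finally show ?thesis by simp
qed

lemma rat_cong_intro:
  assumes "prime p" "u - v = of_int (int p * a)"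
  shows "rat_cong_p p u v"
  unfolding rat_cong_p_def
  by (rule exI[of _ a], rule exI[of _ 1]) (use assms prime_gt_1_nat[OF assms(1)] in simp)

theorem theorem1p7:
  fixes p \<alpha> n :: nat and r s t :: int
  assumes "prime p" and "\<alpha> \<ge> 2"
    and "0 \<le> s" and "s < int p ^ (\<alpha> - 2)"
    and "0 \<le> t" and "t < int p ^ (\<alpha> - 2)"
  shows "rat_cong_p p
    ((of_nat p :: rat) powi (- \<lfloor>(of_int (int p ^ (\<alpha> - 2) * int n + s - int p ^ (\<alpha> - 1)) :: rat)
                                   / of_nat (totient (p ^ \<alpha>))\<rfloor>)
      * of_int (alt_binom_sum (p ^ (\<alpha> - 2) * n + nat s) (int p ^ (\<alpha> - 2) * r + t) (int p ^ \<alpha>)))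
    ((-1) ^ nat t * of_nat (nat s choose nat t)
      * ((of_nat p :: rat) powi (- \<lfloor>(of_int (int n - int p) :: rat) / of_nat (totient (p ^ 2))\<rfloor>)
         * of_int (alt_binom_sum n r (int p ^ 2))))"
proof -
  note p = assms(1) and \<alpha> = assms(2)
  define q where "q = p ^ (\<alpha> - 2)"
  define S where "S = nat s"
  define T where "T = nat t"
  define \<phi> where "\<phi> = int p * (int p - 1)"
  define E where "E = (int n - int p) div \<phi>"
  have p1: "p \<ge> 2" using p prime_ge_2_nat by blast
  have q0: "q > 0" using p1 q_def by simp
  have sS: "s = int S" and tT: "t = int T" using assms(3,5) S_def T_def by simp_all
  have Sq: "S < q" and Tq: "T < q" using assms(4,6) sS tT q_def by (simp_all flip: of_nat_power)
  have phi0: "\<phi> > 0" using p1 \<phi>_def by simp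
  obtain k where k: "\<alpha> = k + 2" using \<alpha> le_Suc_ex by (metis add.commute)
  have pa1: "p ^ (\<alpha> - 1) = q * p" unfolding q_def k by simp
  have tot: "int (totient (p ^ \<alpha>)) = int q * \<phi>"
    using totient_prime_power[OF p, of \<alpha>] \<alpha> pa1 p1 by (simp add: \<phi>_def of_nat_diff)
  have tot2: "int (totient (p ^ 2)) = \<phi>"
    using totient_prime_power[OF p, of 2] p1 by (simp add: \<phi>_def of_nat_diff)
  have F1: "\<lfloor>(of_int (int p ^ (\<alpha> - 2) * int n + s - int p ^ (\<alpha> - 1)) :: rat)
                / of_nat (totient (p ^ \<alpha>))\<rfloor> = E"
  proof -
    have "(of_nat (totient (p ^ \<alpha>)) :: rat) = of_int (int (totient (p ^ \<alpha>)))" by simp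
    then have fl: "\<lfloor>(of_int (int p ^ (\<alpha> - 2) * int n + s - int p ^ (\<alpha> - 1)) :: rat)
                / of_nat (totient (p ^ \<alpha>))\<rfloor>
        = (int p ^ (\<alpha> - 2) * int n + s - int p ^ (\<alpha> - 1)) div int (totient (p ^ \<alpha>))"
      by (simp only: floor_divide_of_int_eq)
    have "(int p ^ (\<alpha> - 2) * int n + s - int p ^ (\<alpha> - 1)) div int (totient (p ^ \<alpha>))
        = (int q * (int n - int p) + s) div int (totient (p ^ \<alpha>))"
      using pa1 by (simp add: q_def algebra_simps flip: of_nat_power)
    also have "(int q * (int n - int p) + s) div int (totient (p ^ \<alpha>))
        = ((int q * (int n - int p) + s) div int q) div \<phi>"
      unfolding tot using phi0 by (simp add: zdiv_zmult2_eq)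
    also have "(int q * (int n - int p) + s) div int q = int n - int p"
      by (rule div_shift_small) (use q0 assms(3) sS Sq in auto)
    finally show ?thesis unfolding fl by (simp add: E_def)
  qed
  have F2: "\<lfloor>(of_int (int n - int p) :: rat) / of_nat (totient (p ^ 2))\<rfloor> = E"
  proof -
    have "(of_nat (totient (p ^ 2)) :: rat) = of_int (int (totient (p ^ 2)))" by simp
    then have "\<lfloor>(of_int (int n - int p) :: rat) / of_nat (totient (p ^ 2))\<rfloor>
        = (int n - int p) div int (totient (p ^ 2))"
      by (simp only: floor_divide_of_int_eq)
    then show ?thesis by (simp add: tot2 E_def)
  qed
  define L1 where "L1 = alt_binom_sum (q * n + S) (int q * r + int T) (int (p ^ \<alpha>))"
  define L2 where "L2 = alt_binom_sum n r (int (p ^ 2))"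
  define Z where "Z = L1 - (-1) ^ T * int (S choose T) * L2"
  have L1e: "alt_binom_sum (p ^ (\<alpha> - 2) * n + nat s) (int p ^ (\<alpha> - 2) * r + t) (int p ^ \<alpha>) = L1"
    unfolding L1_def q_def S_def tT by simp
  have L2e: "alt_binom_sum n r (int p ^ 2) = L2" unfolding L2_def by simp
  define P where "P = (of_nat p :: rat) powi (- E)"
  have diff: "P * of_int L1 - (-1) ^ nat t * of_nat (nat s choose nat t) * (P * of_int L2) = P * of_int Z"
    unfolding Z_def S_def[symmetric] T_def[symmetric] by (simp add: algebra_simps)
  have goal: "rat_cong_p p (P * of_int L1) ((-1) ^ nat t * of_nat (nat s choose nat t) * (P * of_int L2))"
  proof (cases "E \<ge> 0")
    case True
    define e where "e = nat E"
    have np: "n \<ge> p"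
    proof (rule ccontr)
      assume "\<not> n \<ge> p"
      then have "int n - int p < 0" by simp
      then have "E < 0" unfolding E_def using phi0 by (simp add: pos_imp_zdiv_neg_iff)
      then show False using True by simp
    qed
    have "int ((n - p) div (p * (p - 1))) = E"
      unfolding E_def \<phi>_def using np p1 by (simp add: zdiv_int of_nat_diff)
    then have ee: "(n - p) div (p * (p - 1)) = e" unfolding e_def by simp
    have "int p ^ (e + 1) dvd Z"
      using main_int[OF p \<alpha> Sq[unfolded q_def] Tq[unfolded q_def], of n r] unfolding Z_def L1_def L2_def q_def ee .
    then obtain z where z: "Z = int p ^ (e + 1) * z" by blast
    have Ee: "E = int e" using True e_def by simp
    have PE: "P = inverse (of_nat p ^ e)"
      unfolding P_def Ee power_int_minus power_int_of_nat ..
    have "P * of_int Z = of_int (int p * z)"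
      using p1 by (simp add: PE z field_simps)
    then have "P * of_int L1 - (-1) ^ nat t * of_nat (nat s choose nat t) * (P * of_int L2)
        = of_int (int p * z)" by (rule trans[OF diff])
    then show ?thesis by (rule rat_cong_intro[OF p])
  next
    case False
    define k where "k = nat (- E)"
    have k1: "k \<ge> 1" using False k_def by simp
    have mE: "- E = int k" using False k_def by simp
    have PE: "P = of_nat p ^ k"
      unfolding P_def mE by (rule power_int_of_nat)
    obtain k' where k': "k = Suc k'" using k1 by (cases k) auto
    have "P * of_int Z = of_int (int p * (int p ^ (k - 1) * Z))"
      by (simp add: PE k')
    then have "P * of_int L1 - (-1) ^ nat t * of_nat (nat s choose nat t) * (P * of_int L2)
        = of_int (int p * (int p ^ (k - 1) * Z))" by (rule trans[OF diff])
    then show ?thesis by (rule rat_cong_intro[OF p])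
  qed
  show ?thesis using goal unfolding P_def F1 F2 L1e L2e .
qed

end
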